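(* Let $A$ be a ring with Jacobson radical $J(A)$. If the factor ring $A/J(A)$ is centrally essential, then $A/J(A)$ is commutative and $A$ is both right quasi-invariant and left quasi-invariant.
   Context: All rings are associative, unital and non-zero. $Z(A)$ denotes the center of a ring $A$. A ring $A$ is centrally essential if either $A$ is commutative or for every non-central element $a\in A$ there exist non-zero central elements $x,y\in Z(A)$ with $ax=y$ (equivalently, the module $A_{Z(A)}$ is an essential extension of $Z(A)_{Z(A)}$). A ring is right (resp. left) quasi-invariant if every maximal right (resp. left) ideal of it is a two-sided ideal. *)

theory Defs
  imports "HOL-Algebra.QuotRing"
begin

definition right_ideal :: "'a set \<Rightarrow> ('a, 'b) ring_scheme \<Rightarrow> bool" where
  "right_ideal I R \<longleftrightarrow> additive_subgroup I R \<and>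
     (\<forall>a\<in>I. \<forall>x\<in>carrier R. a \<otimes>\<^bsub>R\<^esub> x \<in> I)"

definition left_ideal :: "'a set \<Rightarrow> ('a, 'b) ring_scheme \<Rightarrow> bool" where
  "left_ideal I R \<longleftrightarrow> additive_subgroup I R \<and>
     (\<forall>a\<in>I. \<forall>x\<in>carrier R. x \<otimes>\<^bsub>R\<^esub> a \<in> I)"

definition maximal_right_ideal :: "'a set \<Rightarrow> ('a, 'b) ring_scheme \<Rightarrow> bool" where
  "maximal_right_ideal M R \<longleftrightarrow> right_ideal M R \<and> M \<noteq> carrier R \<and>
     (\<forall>K. right_ideal K R \<and> M \<subseteq> K \<longrightarrow> K = M \<or> K = carrier R)"

definition maximal_left_ideal :: "'a set \<Rightarrow> ('a, 'b) ring_scheme \<Rightarrow> bool" where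
  "maximal_left_ideal M R \<longleftrightarrow> left_ideal M R \<and> M \<noteq> carrier R \<and>
     (\<forall>K. left_ideal K R \<and> M \<subseteq> K \<longrightarrow> K = M \<or> K = carrier R)"

definition jacobson :: "('a, 'b) ring_scheme \<Rightarrow> 'a set" where
  "jacobson R = carrier R \<inter> \<Inter> {M. maximal_right_ideal M R}"

definition ring_center :: "('a, 'b) ring_scheme \<Rightarrow> 'a set" where
  "ring_center R = {z \<in> carrier R. \<forall>a\<in>carrier R. z \<otimes>\<^bsub>R\<^esub> a = a \<otimes>\<^bsub>R\<^esub> z}"

definition is_commutative :: "('a, 'b) ring_scheme \<Rightarrow> bool" where
  "is_commutative R \<longleftrightarrow> (\<forall>a\<in>carrier R. \<forall>b\<in>carrier R. a \<otimes>\<^bsub>R\<^esub> b = b \<otimes>\<^bsub>R\<^esub> a)"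

definition centrally_essential :: "('a, 'b) ring_scheme \<Rightarrow> bool" where
  "centrally_essential R \<longleftrightarrow> is_commutative R \<or>
     (\<forall>a \<in> carrier R - ring_center R. \<exists>x\<in>ring_center R. \<exists>y\<in>ring_center R.
        x \<noteq> \<zero>\<^bsub>R\<^esub> \<and> y \<noteq> \<zero>\<^bsub>R\<^esub> \<and> a \<otimes>\<^bsub>R\<^esub> x = y)"

definition right_quasi_invariant :: "('a, 'b) ring_scheme \<Rightarrow> bool" where
  "right_quasi_invariant R \<longleftrightarrow> (\<forall>M. maximal_right_ideal M R \<longrightarrow> ideal M R)"

definition left_quasi_invariant :: "('a, 'b) ring_scheme \<Rightarrow> bool" where
  "left_quasi_invariant R \<longleftrightarrow> (\<forall>M. maximal_left_ideal M R \<longrightarrow> ideal M R)"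

end

theory Submission
  imports Defs
begin


lemma (in ring) center_mult:
  assumes "x \<in> ring_center R" "y \<in> ring_center R" shows "x \<otimes> y \<in> ring_center R"
proof -
  have x: "x \<in> carrier R" "\<And>a. a \<in> carrier R \<Longrightarrow> x \<otimes> a = a \<otimes> x"
   and y: "y \<in> carrier R" "\<And>a. a \<in> carrier R \<Longrightarrow> y \<otimes> a = a \<otimes> y"
    using assms unfolding ring_center_def by auto
  have h: "x \<otimes> y \<otimes> a = a \<otimes> (x \<otimes> y)" if a: "a \<in> carrier R" for a
  proof -
    have h: "x \<otimes> y \<otimes> a = x \<otimes> (a \<otimes> y)" using x(1) y(1) a y(2)[OF a] by (simp add: m_assoc)
    also have "\<dots> = (x \<otimes> a) \<otimes> y" using x(1) y(1) a by (simp add: m_assoc)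
    also have "\<dots> = a \<otimes> (x \<otimes> y)" using x(1) y(1) a x(2)[OF a] by (simp add: m_assoc)
    finally show ?thesis .
  qed
  show ?thesis using h x(1) y(1) unfolding ring_center_def by simp
qed

lemma (in ring) center_one: "\<one> \<in> ring_center R"
  unfolding ring_center_def by auto

lemma (in ring) ce_comm:
  assumes sp: "\<And>z. z \<in> ring_center R \<Longrightarrow> z \<otimes> z = \<zero> \<Longrightarrow> z = \<zero>"
    and ce: "centrally_essential R"
  shows "is_commutative R"
proof (cases "is_commutative R")
  case True then show ?thesis .
next
  case False
  with ce have W: "\<And>a. a \<in> carrier R \<Longrightarrow> a \<notin> ring_center R \<Longrightarrow>
      \<exists>x\<in>ring_center R. \<exists>y\<in>ring_center R. x \<noteq> \<zero> \<and> y \<noteq> \<zero> \<and> a \<otimes> x = y"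
    unfolding centrally_essential_def by blast
  have cc: "z \<in> carrier R" if "z \<in> ring_center R" for z using that unfolding ring_center_def by auto
  have cm: "z \<otimes> r = r \<otimes> z" if "z \<in> ring_center R" "r \<in> carrier R" for z r
    using that unfolding ring_center_def by auto
  show ?thesis unfolding is_commutative_def
  proof (intro ballI, rule ccontr)
    fix a b assume a: "a \<in> carrier R" and b: "b \<in> carrier R" and ne: "a \<otimes> b \<noteq> b \<otimes> a"
    define d where "d = a \<otimes> b \<ominus> b \<otimes> a"
    have d: "d \<in> carrier R" using a b by (simp add: d_def)
    have "a \<otimes> b = (a \<otimes> b \<ominus> b \<otimes> a) \<oplus> b \<otimes> a" using a b by algebra
    then have dne: "d \<noteq> \<zero>" using ne a b unfolding d_def by auto
    obtain x z where x: "x \<in> ring_center R" and z: "z \<in> ring_center R" and zne: "z \<noteq> \<zero>"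
      and dx: "d \<otimes> x = z"
    proof (cases "d \<in> ring_center R")
      case True then show ?thesis using that[of \<one> d] center_one dne d by simp
    next
      case False then show ?thesis using W[OF d] that by blast
    qed
    obtain s where s: "s \<in> ring_center R" and zs: "z \<otimes> s \<noteq> \<zero>"
      and w: "a \<otimes> (z \<otimes> s) \<in> ring_center R"
    proof (cases "a \<otimes> z \<in> ring_center R")
      case True then show ?thesis using that[of \<one>] center_one z cc zne by simp
    next
      case False
      then obtain x' y' where x': "x' \<in> ring_center R" and y': "y' \<in> ring_center R"
        and "x' \<noteq> \<zero>" "y' \<noteq> \<zero>" and e: "a \<otimes> z \<otimes> x' = y'"
        using W[of "a \<otimes> z"] a z cc by blast
      have "z \<otimes> x' \<noteq> \<zero>"
      proof
        assume "z \<otimes> x' = \<zero>"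
        then have "a \<otimes> z \<otimes> x' = \<zero>" using a z x' cc by (simp add: m_assoc)
        with e \<open>y' \<noteq> \<zero>\<close> show False by simp
      qed
      moreover have "a \<otimes> (z \<otimes> x') \<in> ring_center R" using e y' a z x' cc by (simp add: m_assoc)
      ultimately show ?thesis using that x' by blast
    qed
    define t where "t = z \<otimes> s"
    have t: "t \<in> ring_center R" using center_mult z s t_def by simp
    have tc: "t \<in> carrier R" using cc t by simp
    have "d \<otimes> t = a \<otimes> b \<otimes> t \<ominus> b \<otimes> a \<otimes> t"
      using a b tc d_def by (simp add: l_minus minus_eq l_distr)
    also have "a \<otimes> b \<otimes> t = (a \<otimes> t) \<otimes> b"
      using a b tc cm[OF t b] by (simp add: m_assoc)
    also have "(a \<otimes> t) \<otimes> b = b \<otimes> (a \<otimes> t)"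
      using cm[OF w[folded t_def] b] .
    also have "b \<otimes> (a \<otimes> t) = b \<otimes> a \<otimes> t" using a b tc by (simp add: m_assoc)
    finally have "d \<otimes> t = b \<otimes> a \<otimes> t \<ominus> b \<otimes> a \<otimes> t" .
    then have dt: "d \<otimes> t = \<zero>" using a b tc by (simp add: minus_eq r_neg)
    have xs: "x \<otimes> s \<in> ring_center R" using center_mult x s by simp
    have "t \<otimes> t = d \<otimes> (x \<otimes> s \<otimes> t)" using dx[symmetric] t_def d cc[OF x] cc[OF s] tc
      by (simp add: m_assoc)
    also have "x \<otimes> s \<otimes> t = t \<otimes> (x \<otimes> s)" using cm[OF xs tc] .
    also have "d \<otimes> (t \<otimes> (x \<otimes> s)) = d \<otimes> t \<otimes> (x \<otimes> s)" using d tc cc[OF xs] by (simp add: m_assoc)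
    also have "\<dots> = \<zero>" using dt cc[OF xs] by simp
    finally have "t = \<zero>" using sp t by blast
    with zs t_def show False by simp
  qed
qed



definition rinv :: "('a, 'b) ring_scheme \<Rightarrow> 'a \<Rightarrow> bool" where
  "rinv R x \<longleftrightarrow> (\<exists>u\<in>carrier R. x \<otimes>\<^bsub>R\<^esub> u = \<one>\<^bsub>R\<^esub>)"

context ring begin

lemma addsubI:
  assumes "I \<subseteq> carrier R" "\<zero> \<in> I" "\<And>a b. a \<in> I \<Longrightarrow> b \<in> I \<Longrightarrow> a \<oplus> b \<in> I"
    "\<And>a. a \<in> I \<Longrightarrow> \<ominus> a \<in> I"
  shows "additive_subgroup I R"
  apply (intro additive_subgroupI add.subgroupI)
  using assms by (auto simp: a_inv_def[symmetric])

lemma rI_as: "right_ideal I R \<Longrightarrow> additive_subgroup I R"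
  by (simp add: right_ideal_def)
lemma rI_sub: "right_ideal I R \<Longrightarrow> I \<subseteq> carrier R"
  by (rule additive_subgroup.a_subset[OF rI_as])
lemma rI_mult: "right_ideal I R \<Longrightarrow> a \<in> I \<Longrightarrow> x \<in> carrier R \<Longrightarrow> a \<otimes> x \<in> I"
  by (simp add: right_ideal_def)
lemma rI_add: "right_ideal I R \<Longrightarrow> a \<in> I \<Longrightarrow> b \<in> I \<Longrightarrow> a \<oplus> b \<in> I"
  by (rule additive_subgroup.a_closed[OF rI_as])
lemma rI_neg: "right_ideal I R \<Longrightarrow> a \<in> I \<Longrightarrow> \<ominus> a \<in> I"
  by (rule additive_subgroup.a_inv_closed[OF rI_as])
lemma rI_zero: "right_ideal I R \<Longrightarrow> \<zero> \<in> I"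
  by (rule additive_subgroup.zero_closed[OF rI_as])
lemma rI_minus: "right_ideal I R \<Longrightarrow> a \<in> I \<Longrightarrow> b \<in> I \<Longrightarrow> a \<ominus> b \<in> I"
  unfolding minus_eq by (intro rI_add rI_neg)
lemma rI_one: assumes "right_ideal I R" "\<one> \<in> I" shows "I = carrier R"
proof (rule equalityI)
  show "I \<subseteq> carrier R" by (rule rI_sub[OF assms(1)])
  show "carrier R \<subseteq> I"
  proof (rule subsetI)
    fix x assume x: "x \<in> carrier R"
    have "\<one> \<otimes> x \<in> I" by (rule rI_mult[OF assms x])
    then show "x \<in> I" using x by (simp only: l_one)
  qed
qed

lemma lI_as: "left_ideal I R \<Longrightarrow> additive_subgroup I R"
  by (simp add: left_ideal_def)
lemma lI_sub: "left_ideal I R \<Longrightarrow> I \<subseteq> carrier R"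
  by (rule additive_subgroup.a_subset[OF lI_as])
lemma lI_mult: "left_ideal I R \<Longrightarrow> a \<in> I \<Longrightarrow> x \<in> carrier R \<Longrightarrow> x \<otimes> a \<in> I"
  by (simp add: left_ideal_def)
lemma lI_add: "left_ideal I R \<Longrightarrow> a \<in> I \<Longrightarrow> b \<in> I \<Longrightarrow> a \<oplus> b \<in> I"
  by (rule additive_subgroup.a_closed[OF lI_as])
lemma lI_neg: "left_ideal I R \<Longrightarrow> a \<in> I \<Longrightarrow> \<ominus> a \<in> I"
  by (rule additive_subgroup.a_inv_closed[OF lI_as])
lemma lI_zero: "left_ideal I R \<Longrightarrow> \<zero> \<in> I"
  by (rule additive_subgroup.zero_closed[OF lI_as])
lemma lI_minus: "left_ideal I R \<Longrightarrow> a \<in> I \<Longrightarrow> b \<in> I \<Longrightarrow> a \<ominus> b \<in> I"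
  unfolding minus_eq by (intro lI_add lI_neg)
lemma lI_one: assumes "left_ideal I R" "\<one> \<in> I" shows "I = carrier R"
proof (rule equalityI)
  show "I \<subseteq> carrier R" by (rule lI_sub[OF assms(1)])
  show "carrier R \<subseteq> I"
  proof (rule subsetI)
    fix x assume x: "x \<in> carrier R"
    have "x \<otimes> \<one> \<in> I" by (rule lI_mult[OF assms x])
    then show "x \<in> I" using x by (simp only: r_one)
  qed
qed

lemma sum_memI: "r \<in> carrier R \<Longrightarrow> m \<in> M \<Longrightarrow> y = x \<otimes> r \<oplus> m \<Longrightarrow>
   y \<in> {x \<otimes> r \<oplus> m | r m. r \<in> carrier R \<and> m \<in> M}"
  by blast
lemma lsum_memI: "r \<in> carrier R \<Longrightarrow> m \<in> M \<Longrightarrow> y = r \<otimes> x \<oplus> m \<Longrightarrow>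
   y \<in> {r \<otimes> x \<oplus> m | r m. r \<in> carrier R \<and> m \<in> M}"
  by blast

lemma rI_sum:
  assumes M: "right_ideal M R" and x: "x \<in> carrier R"
  shows "right_ideal {x \<otimes> r \<oplus> m | r m. r \<in> carrier R \<and> m \<in> M} R"
proof -
  let ?S = "{x \<otimes> r \<oplus> m | r m. r \<in> carrier R \<and> m \<in> M}"
  note Mc = rI_sub[OF M]
  have 1: "?S \<subseteq> carrier R" using x Mc by auto
  have 2: "\<zero> \<in> ?S" by (rule sum_memI[OF zero_closed rI_zero[OF M]]) (simp add: x)
  have 3: "a \<oplus> b \<in> ?S" if A: "a \<in> ?S" and B: "b \<in> ?S" for a b
  proof -
    obtain r1 m1 r2 m2 where a: "a = x \<otimes> r1 \<oplus> m1" "r1 \<in> carrier R" "m1 \<in> M"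
      and b: "b = x \<otimes> r2 \<oplus> m2" "r2 \<in> carrier R" "m2 \<in> M" using A B by blast
    have e: "a \<oplus> b = x \<otimes> (r1 \<oplus> r2) \<oplus> (m1 \<oplus> m2)"
      unfolding a(1) b(1) using x a(2) b(2) subsetD[OF Mc a(3)] subsetD[OF Mc b(3)] by algebra
    show ?thesis by (rule sum_memI[OF _ rI_add[OF M a(3) b(3)] e]) (simp add: a(2) b(2))
  qed
  have 4: "\<ominus> a \<in> ?S" if A: "a \<in> ?S" for a
  proof -
    obtain r1 m1 where a: "a = x \<otimes> r1 \<oplus> m1" "r1 \<in> carrier R" "m1 \<in> M" using A by blast
    have e: "\<ominus> a = x \<otimes> (\<ominus> r1) \<oplus> (\<ominus> m1)"
      unfolding a(1) using x a(2) subsetD[OF Mc a(3)] by algebra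
    show ?thesis by (rule sum_memI[OF _ rI_neg[OF M a(3)] e]) (simp add: a(2))
  qed
  have 5: "a \<otimes> s \<in> ?S" if A: "a \<in> ?S" and sc: "s \<in> carrier R" for a s
  proof -
    obtain r1 m1 where a: "a = x \<otimes> r1 \<oplus> m1" "r1 \<in> carrier R" "m1 \<in> M" using A by blast
    have e: "a \<otimes> s = x \<otimes> (r1 \<otimes> s) \<oplus> (m1 \<otimes> s)"
      unfolding a(1) using x a(2) sc subsetD[OF Mc a(3)] by algebra
    show ?thesis by (rule sum_memI[OF _ rI_mult[OF M a(3) sc] e]) (simp add: a(2) sc)
  qed
  show ?thesis unfolding right_ideal_def using addsubI[OF 1 2 3 4] 5 by blast
qed

lemma lI_sum:
  assumes M: "left_ideal M R" and x: "x \<in> carrier R"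
  shows "left_ideal {r \<otimes> x \<oplus> m | r m. r \<in> carrier R \<and> m \<in> M} R"
proof -
  let ?S = "{r \<otimes> x \<oplus> m | r m. r \<in> carrier R \<and> m \<in> M}"
  note Mc = lI_sub[OF M]
  have 1: "?S \<subseteq> carrier R" using x Mc by auto
  have 2: "\<zero> \<in> ?S" by (rule lsum_memI[OF zero_closed lI_zero[OF M]]) (simp add: x)
  have 3: "a \<oplus> b \<in> ?S" if A: "a \<in> ?S" and B: "b \<in> ?S" for a b
  proof -
    obtain r1 m1 r2 m2 where a: "a = r1 \<otimes> x \<oplus> m1" "r1 \<in> carrier R" "m1 \<in> M"
      and b: "b = r2 \<otimes> x \<oplus> m2" "r2 \<in> carrier R" "m2 \<in> M" using A B by blast
    have e: "a \<oplus> b = (r1 \<oplus> r2) \<otimes> x \<oplus> (m1 \<oplus> m2)"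
      unfolding a(1) b(1) using x a(2) b(2) subsetD[OF Mc a(3)] subsetD[OF Mc b(3)] by algebra
    show ?thesis by (rule lsum_memI[OF _ lI_add[OF M a(3) b(3)] e]) (simp add: a(2) b(2))
  qed
  have 4: "\<ominus> a \<in> ?S" if A: "a \<in> ?S" for a
  proof -
    obtain r1 m1 where a: "a = r1 \<otimes> x \<oplus> m1" "r1 \<in> carrier R" "m1 \<in> M" using A by blast
    have e: "\<ominus> a = (\<ominus> r1) \<otimes> x \<oplus> (\<ominus> m1)"
      unfolding a(1) using x a(2) subsetD[OF Mc a(3)] by algebra
    show ?thesis by (rule lsum_memI[OF _ lI_neg[OF M a(3)] e]) (simp add: a(2))
  qed
  have 5: "s \<otimes> a \<in> ?S" if A: "a \<in> ?S" and sc: "s \<in> carrier R" for a s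
  proof -
    obtain r1 m1 where a: "a = r1 \<otimes> x \<oplus> m1" "r1 \<in> carrier R" "m1 \<in> M" using A by blast
    have e: "s \<otimes> a = (s \<otimes> r1) \<otimes> x \<oplus> (s \<otimes> m1)"
      unfolding a(1) using x a(2) sc subsetD[OF Mc a(3)] by algebra
    show ?thesis by (rule lsum_memI[OF _ lI_mult[OF M a(3) sc] e]) (simp add: a(2) sc)
  qed
  show ?thesis unfolding left_ideal_def using addsubI[OF 1 2 3 4] 5 by blast
qed

end


context ring begin

lemma max_exists:
  assumes I: "right_ideal I R" and one: "\<one> \<notin> I"
  shows "\<exists>M. maximal_right_ideal M R \<and> I \<subseteq> M"
proof -
  define S where "S = {K. right_ideal K R \<and> I \<subseteq> K \<and> \<one> \<notin> K}"
  have IS: "I \<in> S" using I one by (simp add: S_def)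
  have "\<forall>C\<in>chains S. \<exists>U\<in>S. \<forall>X\<in>C. X \<subseteq> U"
  proof
    fix C assume C: "C \<in> chains S"
    show "\<exists>U\<in>S. \<forall>X\<in>C. X \<subseteq> U"
    proof (cases "C = {}")
      case True then show ?thesis using IS by blast
    next
      case False
      then obtain K0 where K0: "K0 \<in> C" by blast
      have CS: "C \<subseteq> S" using chainsD2[OF C] .
      have Kr: "right_ideal K R" if "K \<in> C" for K using CS that by (auto simp: S_def)
      have Ki: "I \<subseteq> K" if "K \<in> C" for K using CS that by (auto simp: S_def)
      have K1: "\<one> \<notin> K" if "K \<in> C" for K using CS that by (auto simp: S_def)
      have sub: "\<Union>C \<subseteq> carrier R"
      proof
        fix a assume "a \<in> \<Union>C"
        then obtain K where "K \<in> C" "a \<in> K" by blast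
        then show "a \<in> carrier R" using rI_sub[OF Kr[OF \<open>K \<in> C\<close>]] by blast
      qed
      have z: "\<zero> \<in> \<Union>C" using rI_zero[OF Kr[OF K0]] K0 by blast
      have add: "a \<oplus> b \<in> \<Union>C" if A: "a \<in> \<Union>C" and B: "b \<in> \<Union>C" for a b
      proof -
        obtain K1 where k1: "K1 \<in> C" "a \<in> K1" using A by blast
        obtain K2 where k2: "K2 \<in> C" "b \<in> K2" using B by blast
        from chainsD[OF C k1(1) k2(1)] show ?thesis
        proof
          assume "K1 \<subseteq> K2"
          then have "a \<oplus> b \<in> K2" using rI_add[OF Kr[OF k2(1)]] k1(2) k2(2) by blast
          then show ?thesis using k2(1) by blast
        next
          assume "K2 \<subseteq> K1"
          then have "a \<oplus> b \<in> K1" using rI_add[OF Kr[OF k1(1)]] k1(2) k2(2) by blast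
          then show ?thesis using k1(1) by blast
        qed
      qed
      have neg: "\<ominus> a \<in> \<Union>C" if A: "a \<in> \<Union>C" for a
      proof -
        obtain K1 where k1: "K1 \<in> C" "a \<in> K1" using A by blast
        have "\<ominus> a \<in> K1" by (rule rI_neg[OF Kr[OF k1(1)] k1(2)])
        then show ?thesis using k1(1) by blast
      qed
      have mul: "a \<otimes> s \<in> \<Union>C" if A: "a \<in> \<Union>C" and sc: "s \<in> carrier R" for a s
      proof -
        obtain K1 where k1: "K1 \<in> C" "a \<in> K1" using A by blast
        have "a \<otimes> s \<in> K1" by (rule rI_mult[OF Kr[OF k1(1)] k1(2) sc])
        then show ?thesis using k1(1) by blast
      qed
      have "right_ideal (\<Union>C) R" unfolding right_ideal_def
        using addsubI[OF sub z add neg] mul by blast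
      moreover have "I \<subseteq> \<Union>C" using Ki[OF K0] K0 by blast
      moreover have "\<one> \<notin> \<Union>C" using K1 by (simp only: Union_iff) blast
      ultimately have "\<Union>C \<in> S" by (simp add: S_def)
      then show ?thesis by blast
    qed
  qed
  from Zorn_Lemma2[OF this] obtain M where MS: "M \<in> S"
    and Mmax: "\<forall>X\<in>S. M \<subseteq> X \<longrightarrow> X = M" by blast
  have Mr: "right_ideal M R" and IM: "I \<subseteq> M" and M1: "\<one> \<notin> M" using MS by (auto simp: S_def)
  have "maximal_right_ideal M R" unfolding maximal_right_ideal_def
  proof (intro conjI allI impI)
    show "right_ideal M R" by fact
    show "M \<noteq> carrier R" using M1 by auto
    fix K assume K: "right_ideal K R \<and> M \<subseteq> K"
    show "K = M \<or> K = carrier R"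
    proof (cases "\<one> \<in> K")
      case True then show ?thesis using rI_one K by blast
    next
      case False
      then have "K \<in> S" using K IM by (auto simp: S_def)
      then show ?thesis using Mmax K by blast
    qed
  qed
  then show ?thesis using IM by blast
qed

lemma max_gen:
  assumes M: "maximal_right_ideal M R" and x: "x \<in> carrier R" and xM: "x \<notin> M"
  shows "\<exists>r\<in>carrier R. \<exists>m\<in>M. \<one> = x \<otimes> r \<oplus> m"
proof -
  have Mr: "right_ideal M R" using M by (simp add: maximal_right_ideal_def)
  let ?K = "{x \<otimes> r \<oplus> m | r m. r \<in> carrier R \<and> m \<in> M}"
  have K: "right_ideal ?K R" by (rule rI_sum[OF Mr x])
  have "M \<subseteq> ?K"
  proof
    fix m assume m: "m \<in> M"
    have "m = x \<otimes> \<zero> \<oplus> m" using x subsetD[OF rI_sub[OF Mr] m] by simp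
    then show "m \<in> ?K" using m by (intro sum_memI[OF zero_closed m])
  qed
  moreover have "x \<in> ?K"
    using x by (intro sum_memI[OF one_closed rI_zero[OF Mr]]) simp
  ultimately have "?K = carrier R" using M K xM unfolding maximal_right_ideal_def by blast
  then have "\<one> \<in> ?K" by simp
  then show ?thesis by blast
qed

lemma lmax_gen:
  assumes M: "maximal_left_ideal M R" and x: "x \<in> carrier R" and xM: "x \<notin> M"
  shows "\<exists>r\<in>carrier R. \<exists>m\<in>M. \<one> = r \<otimes> x \<oplus> m"
proof -
  have Mr: "left_ideal M R" using M by (simp add: maximal_left_ideal_def)
  let ?K = "{r \<otimes> x \<oplus> m | r m. r \<in> carrier R \<and> m \<in> M}"
  have K: "left_ideal ?K R" by (rule lI_sum[OF Mr x])
  have "M \<subseteq> ?K"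
  proof
    fix m assume m: "m \<in> M"
    have "m = \<zero> \<otimes> x \<oplus> m" using x subsetD[OF lI_sub[OF Mr] m] by simp
    then show "m \<in> ?K" using m by (intro lsum_memI[OF zero_closed m])
  qed
  moreover have "x \<in> ?K"
    using x by (intro lsum_memI[OF one_closed lI_zero[OF Mr]]) simp
  ultimately have "?K = carrier R" using M K xM unfolding maximal_left_ideal_def by blast
  then have "\<one> \<in> ?K" by simp
  then show ?thesis by blast
qed

end


context ring begin

lemma L1: "a \<in> carrier R \<Longrightarrow> b \<in> carrier R \<Longrightarrow> (\<one> \<ominus> a) \<otimes> (\<one> \<oplus> b) = \<one> \<oplus> b \<ominus> a \<ominus> a \<otimes> b"
  by (simp add: l_distr r_distr minus_eq l_minus r_minus a_ac)
lemma L2: "a \<in> carrier R \<Longrightarrow> b \<in> carrier R \<Longrightarrow> (\<one> \<ominus> a) \<otimes> b = b \<ominus> a \<otimes> b"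
  by (simp add: l_distr r_distr minus_eq l_minus r_minus a_ac)

lemma zero_rI: "right_ideal {\<zero>} R"
proof -
  have "additive_subgroup {\<zero>} R" by (rule addsubI) auto
  then show ?thesis unfolding right_ideal_def by auto
qed

lemma mr: "maximal_right_ideal M R \<Longrightarrow> right_ideal M R"
  by (simp add: maximal_right_ideal_def)
lemma mr_one: assumes "maximal_right_ideal M R" shows "\<one> \<notin> M"
proof
  assume "\<one> \<in> M"
  then have "M = carrier R" by (rule rI_one[OF mr[OF assms]])
  then show False using assms by (simp add: maximal_right_ideal_def)
qed

lemma J_sub: "jacobson R \<subseteq> carrier R" by (simp add: jacobson_def)
lemma J_M: "j \<in> jacobson R \<Longrightarrow> maximal_right_ideal M R \<Longrightarrow> j \<in> M"
  unfolding jacobson_def by blast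
lemma J_I: "j \<in> carrier R \<Longrightarrow> (\<And>M. maximal_right_ideal M R \<Longrightarrow> j \<in> M) \<Longrightarrow> j \<in> jacobson R"
  unfolding jacobson_def by blast

lemma J_right: "right_ideal (jacobson R) R"
proof -
  have "additive_subgroup (jacobson R) R"
  proof (rule addsubI[OF J_sub])
    show "\<zero> \<in> jacobson R" by (rule J_I) (auto intro: rI_zero[OF mr])
    show "a \<oplus> b \<in> jacobson R" if A: "a \<in> jacobson R" and B: "b \<in> jacobson R" for a b
      using A B J_sub by (intro J_I) (auto intro: rI_add[OF mr] J_M)
    show "\<ominus> a \<in> jacobson R" if A: "a \<in> jacobson R" for a
      using A J_sub by (intro J_I) (auto intro: rI_neg[OF mr] J_M)
  qed
  moreover have "a \<otimes> x \<in> jacobson R" if A: "a \<in> jacobson R" and x: "x \<in> carrier R" for a x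
    using A J_sub x by (intro J_I) (auto intro: rI_mult[OF mr] J_M)
  ultimately show ?thesis unfolding right_ideal_def by blast
qed

lemma J_char1:
  assumes j: "j \<in> jacobson R" and r: "r \<in> carrier R"
  shows "rinv R (\<one> \<ominus> j \<otimes> r)"
proof (rule ccontr)
  assume nr: "\<not> rinv R (\<one> \<ominus> j \<otimes> r)"
  have jc: "j \<in> carrier R" using j J_sub by blast
  have p: "j \<otimes> r \<in> jacobson R" by (rule rI_mult[OF J_right j r])
  define q where "q = \<one> \<ominus> j \<otimes> r"
  have qc: "q \<in> carrier R" using jc r by (simp add: q_def)
  let ?K = "{q \<otimes> s \<oplus> m | s m. s \<in> carrier R \<and> m \<in> {\<zero>}}"
  have K: "right_ideal ?K R" by (rule rI_sum[OF zero_rI qc])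
  have "\<one> \<notin> ?K"
  proof
    assume "\<one> \<in> ?K"
    then obtain s where s: "s \<in> carrier R" "\<one> = q \<otimes> s \<oplus> \<zero>" by blast
    then have "q \<otimes> s = \<one>" using qc by simp
    then show False using nr s unfolding rinv_def q_def by blast
  qed
  then obtain M where M: "maximal_right_ideal M R" and KM: "?K \<subseteq> M"
    using max_exists[OF K] by blast
  have "q \<in> ?K" using qc by (intro sum_memI[OF one_closed]) auto
  then have qM: "q \<in> M" using KM by blast
  have pM: "j \<otimes> r \<in> M" by (rule J_M[OF p M])
  have "\<one> = q \<oplus> j \<otimes> r" unfolding q_def using jc r by algebra
  then have "\<one> \<in> M" using rI_add[OF mr[OF M] qM pM] by simp
  then show False using mr_one[OF M] by blast
qed

lemma J_char2:
  assumes jc: "j \<in> carrier R" and h: "\<And>r. r \<in> carrier R \<Longrightarrow> rinv R (\<one> \<ominus> j \<otimes> r)"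
  shows "j \<in> jacobson R"
proof (rule J_I[OF jc], rule ccontr)
  fix M assume M: "maximal_right_ideal M R" and jM: "j \<notin> M"
  obtain r m where r: "r \<in> carrier R" and m: "m \<in> M" and e: "\<one> = j \<otimes> r \<oplus> m"
    using max_gen[OF M jc jM] by blast
  have mc: "m \<in> carrier R" using m rI_sub[OF mr[OF M]] by blast
  have "m = (j \<otimes> r \<oplus> m) \<ominus> j \<otimes> r" using jc r mc by algebra
  then have me: "m = \<one> \<ominus> j \<otimes> r" using e by simp
  obtain u where u: "u \<in> carrier R" "m \<otimes> u = \<one>" using h[OF r] me unfolding rinv_def by auto
  have "m \<otimes> u \<in> M" by (rule rI_mult[OF mr[OF M] m u(1)])
  then show False using u(2) mr_one[OF M] by simp
qed

lemma J_left:
  assumes j: "j \<in> jacobson R" and s: "s \<in> carrier R"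
  shows "s \<otimes> j \<in> jacobson R"
proof -
  have jc: "j \<in> carrier R" using j J_sub by blast
  show ?thesis
  proof (rule J_char2)
    show "s \<otimes> j \<in> carrier R" using jc s by simp
    fix r assume r: "r \<in> carrier R"
    obtain u where u: "u \<in> carrier R" "(\<one> \<ominus> j \<otimes> (r \<otimes> s)) \<otimes> u = \<one>"
      using J_char1[OF j, of "r \<otimes> s"] r s unfolding rinv_def by auto
    define a where "a = s \<otimes> j \<otimes> r"
    define b where "b = s \<otimes> u \<otimes> j \<otimes> r"
    define w where "w = j \<otimes> (r \<otimes> s)"
    have ac: "a \<in> carrier R" and bc: "b \<in> carrier R" and wc: "w \<in> carrier R"
      using jc r s u(1) by (simp_all add: a_def b_def w_def)
    have uw: "u \<ominus> w \<otimes> u = \<one>" using u(2) L2[OF wc u(1)] by (simp add: w_def)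
    have "b \<ominus> a \<otimes> b = s \<otimes> (u \<ominus> w \<otimes> u) \<otimes> j \<otimes> r"
      unfolding a_def b_def w_def using jc r s u(1) by algebra
    also have "\<dots> = a" using uw jc r s by (simp add: a_def)
    finally have ba: "b \<ominus> a \<otimes> b = a" .
    have "(\<one> \<ominus> s \<otimes> j \<otimes> r) \<otimes> (\<one> \<oplus> s \<otimes> u \<otimes> j \<otimes> r) = \<one> \<oplus> b \<ominus> a \<ominus> a \<otimes> b"
      unfolding a_def[symmetric] b_def[symmetric] by (rule L1[OF ac bc])
    also have "\<dots> = \<one> \<oplus> (b \<ominus> a \<otimes> b) \<ominus> a" using ac bc by algebra
    also have "\<dots> = \<one>" using ac unfolding ba by algebra
    finally show "rinv R (\<one> \<ominus> s \<otimes> j \<otimes> r)" unfolding rinv_def using jc r s u(1)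
      by (intro bexI[of _ "\<one> \<oplus> s \<otimes> u \<otimes> j \<otimes> r"]) auto
  qed
qed

lemma J_ideal: "ideal (jacobson R) R"
  by (rule idealI[OF ring_axioms additive_subgroup.a_subgroup[OF rI_as[OF J_right]]])
     (auto intro: J_left rI_mult[OF J_right])

lemma J_unit:
  assumes j: "j \<in> jacobson R"
  shows "\<exists>v\<in>carrier R. v \<otimes> (\<one> \<ominus> j) = \<one>"
proof -
  have jc: "j \<in> carrier R" using j J_sub by blast
  obtain u where u: "u \<in> carrier R" "(\<one> \<ominus> j \<otimes> \<one>) \<otimes> u = \<one>"
    using J_char1[OF j one_closed] unfolding rinv_def by auto
  have u2: "(\<one> \<ominus> j) \<otimes> u = \<one>" using u jc by simp
  have k: "\<ominus> (j \<otimes> u) \<in> jacobson R"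
    by (rule rI_neg[OF J_right rI_mult[OF J_right j u(1)]])
  obtain v where v: "v \<in> carrier R" "(\<one> \<ominus> (\<ominus> (j \<otimes> u)) \<otimes> \<one>) \<otimes> v = \<one>"
    using J_char1[OF k one_closed] unfolding rinv_def by auto
  have "u = (\<one> \<ominus> j) \<otimes> u \<oplus> j \<otimes> u" using jc u(1) by algebra
  also have "\<dots> = \<one> \<oplus> j \<otimes> u" using u2 by simp
  also have "\<dots> = \<one> \<ominus> (\<ominus> (j \<otimes> u)) \<otimes> \<one>" using jc u(1) by (simp add: minus_eq)
  finally have uv: "u \<otimes> v = \<one>" using v(2) by simp
  have "\<one> \<ominus> j = (\<one> \<ominus> j) \<otimes> (u \<otimes> v)" using uv jc by simp
  also have "\<dots> = ((\<one> \<ominus> j) \<otimes> u) \<otimes> v" using jc u(1) v(1) by (simp add: m_assoc)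
  also have "\<dots> = v" using u2 v(1) by simp
  finally have "u \<otimes> (\<one> \<ominus> j) = \<one>" using uv by simp
  then show ?thesis using u(1) by blast
qed

lemma J_sp:
  assumes z: "z \<in> carrier R" and c: "\<And>r. r \<in> carrier R \<Longrightarrow> z \<otimes> r \<ominus> r \<otimes> z \<in> jacobson R"
    and zz: "z \<otimes> z \<in> jacobson R"
  shows "z \<in> jacobson R"
proof (rule J_char2[OF z])
  fix r assume r: "r \<in> carrier R"
  have "z \<otimes> r \<otimes> z \<otimes> r = z \<otimes> z \<otimes> r \<otimes> r \<ominus> z \<otimes> (z \<otimes> r \<ominus> r \<otimes> z) \<otimes> r"
    using z r by algebra
  moreover have "z \<otimes> z \<otimes> r \<otimes> r \<in> jacobson R"
    using rI_mult[OF J_right rI_mult[OF J_right zz r] r] .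
  moreover have "z \<otimes> (z \<otimes> r \<ominus> r \<otimes> z) \<otimes> r \<in> jacobson R"
    using rI_mult[OF J_right J_left[OF c[OF r] z] r] .
  ultimately have q: "z \<otimes> r \<otimes> z \<otimes> r \<in> jacobson R"
    using rI_minus[OF J_right] by simp
  obtain u where u: "u \<in> carrier R" "(\<one> \<ominus> (z \<otimes> r \<otimes> z \<otimes> r) \<otimes> \<one>) \<otimes> u = \<one>"
    using J_char1[OF q one_closed] unfolding rinv_def by auto
  have "(\<one> \<ominus> z \<otimes> r) \<otimes> ((\<one> \<oplus> z \<otimes> r) \<otimes> u) = (\<one> \<ominus> (z \<otimes> r \<otimes> z \<otimes> r) \<otimes> \<one>) \<otimes> u"
    using z r u(1) by algebra
  then show "rinv R (\<one> \<ominus> z \<otimes> r)" unfolding rinv_def using u z r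
    by (intro bexI[of _ "(\<one> \<oplus> z \<otimes> r) \<otimes> u"]) auto
qed

end


lemma (in ideal) coset_eq:
  assumes "a \<in> carrier R" "b \<in> carrier R"
  shows "(I +> a = I +> b) \<longleftrightarrow> a \<ominus> b \<in> I"
proof
  assume e: "I +> a = I +> b"
  have "a \<in> I +> b" using a_rcos_self[OF assms(1)] e by simp
  then show "a \<ominus> b \<in> I" using a_rcos_module_minus[OF ring_axioms assms(2) assms(1)] by simp
next
  assume "a \<ominus> b \<in> I"
  then have "a \<in> I +> b" using a_rcos_module_minus[OF ring_axioms assms(2) assms(1)] by simp
  then show "I +> a = I +> b" using a_repr_independence'[of a b] assms by simp
qed

lemma (in ideal) quot_carrier:
  "X \<in> carrier (R Quot I) \<Longrightarrow> \<exists>a\<in>carrier R. X = I +> a"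
  by (auto simp: FactRing_simps)

lemma (in ideal) quot_carrier2:
  "a \<in> carrier R \<Longrightarrow> I +> a \<in> carrier (R Quot I)"
  by (auto simp: FactRing_simps)

lemma (in ideal) quot_mult:
  "a \<in> carrier R \<Longrightarrow> b \<in> carrier R \<Longrightarrow> (I +> a) \<otimes>\<^bsub>R Quot I\<^esub> (I +> b) = I +> (a \<otimes> b)"
  by (simp add: FactRing_def rcoset_mult_add)

lemma (in ideal) quot_zero: "\<zero>\<^bsub>R Quot I\<^esub> = I"
  by (simp add: FactRing_def)

lemma (in ideal) coset_zero:
  assumes "a \<in> carrier R" shows "(I +> a = I) \<longleftrightarrow> a \<in> I"
proof -
  have "I +> \<zero> = I" by (rule a_rcos_const[OF additive_subgroup.zero_closed[OF ideal.axioms(1)[OF ideal_axioms]]])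
  then have "(I +> a = I) \<longleftrightarrow> (I +> a = I +> \<zero>)" by simp
  also have "\<dots> \<longleftrightarrow> a \<ominus> \<zero> \<in> I" by (rule coset_eq[OF assms zero_closed])
  finally show ?thesis using assms by (simp add: minus_eq)
qed

lemma (in ring) main_aux:
  assumes ce: "centrally_essential (R Quot jacobson R)"
  shows "is_commutative (R Quot jacobson R) \<and> right_quasi_invariant R \<and> left_quasi_invariant R"
proof -
  define J where "J = jacobson R"
  have Jid: "ideal J R" unfolding J_def by (rule J_ideal)
  interpret I: ideal J R by (rule Jid)
  interpret Q: ring "R Quot J" by (rule I.quotient_is_ring)
  have Jc: "J \<subseteq> carrier R" unfolding J_def by (rule J_sub)
  have sp: "z = \<zero>\<^bsub>R Quot J\<^esub>"
    if zc: "z \<in> ring_center (R Quot J)" and zz: "z \<otimes>\<^bsub>R Quot J\<^esub> z = \<zero>\<^bsub>R Quot J\<^esub>" for z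
  proof -
    have zcar: "z \<in> carrier (R Quot J)" using zc by (simp add: ring_center_def)
    obtain c where c: "c \<in> carrier R" and zdef: "z = J +> c" using I.quot_carrier[OF zcar] by blast
    have comm: "c \<otimes> r \<ominus> r \<otimes> c \<in> jacobson R" if r: "r \<in> carrier R" for r
    proof -
      have "z \<otimes>\<^bsub>R Quot J\<^esub> (J +> r) = (J +> r) \<otimes>\<^bsub>R Quot J\<^esub> z"
        using zc I.quot_carrier2[OF r] by (simp add: ring_center_def)
      then have "J +> (c \<otimes> r) = J +> (r \<otimes> c)" using I.quot_mult c r zdef by simp
      then show ?thesis using I.coset_eq c r J_def by simp
    qed
    have "J +> (c \<otimes> c) = J" using zz I.quot_mult[OF c c] I.quot_zero zdef by simp
    then have "c \<otimes> c \<in> jacobson R" using I.coset_zero c J_def by simp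
    then have "c \<in> J" using J_sp[OF c comm] J_def by simp
    then show ?thesis using I.coset_zero c zdef I.quot_zero by simp
  qed
  have qc: "is_commutative (R Quot J)"
    by (rule Q.ce_comm[OF sp]) (use ce J_def in simp_all)
  have comm: "a \<otimes> b \<ominus> b \<otimes> a \<in> J" if a: "a \<in> carrier R" and b: "b \<in> carrier R" for a b
  proof -
    have "(J +> a) \<otimes>\<^bsub>R Quot J\<^esub> (J +> b) = (J +> b) \<otimes>\<^bsub>R Quot J\<^esub> (J +> a)"
      using qc I.quot_carrier2[OF a] I.quot_carrier2[OF b] unfolding is_commutative_def by blast
    then have "J +> (a \<otimes> b) = J +> (b \<otimes> a)" using I.quot_mult a b by simp
    then show ?thesis using I.coset_eq a b by simp
  qed
  have rq: "right_quasi_invariant R" unfolding right_quasi_invariant_def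
  proof (intro allI impI)
    fix M assume M: "maximal_right_ideal M R"
    have Mr: "right_ideal M R" by (rule mr[OF M])
    have JM: "J \<subseteq> M" using J_M[OF _ M] J_def by blast
    show "ideal M R"
    proof (rule idealI[OF ring_axioms additive_subgroup.a_subgroup[OF rI_as[OF Mr]]])
      fix a x assume a: "a \<in> M" and x: "x \<in> carrier R"
      have ac: "a \<in> carrier R" using a rI_sub[OF Mr] by blast
      show "a \<otimes> x \<in> M" by (rule rI_mult[OF Mr a x])
      have eq: "x \<otimes> a = a \<otimes> x \<ominus> (a \<otimes> x \<ominus> x \<otimes> a)" using ac x by algebra
      have "a \<otimes> x \<ominus> x \<otimes> a \<in> M" using comm[OF ac x] JM by blast
      then have mem: "a \<otimes> x \<ominus> (a \<otimes> x \<ominus> x \<otimes> a) \<in> M" by (rule rI_minus[OF Mr rI_mult[OF Mr a x]])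
      show "x \<otimes> a \<in> M" using mem eq by metis
    qed
  qed
  have lq: "left_quasi_invariant R" unfolding left_quasi_invariant_def
  proof (intro allI impI)
    fix L assume L: "maximal_left_ideal L R"
    have Lr: "left_ideal L R" using L by (simp add: maximal_left_ideal_def)
    have Lne: "L \<noteq> carrier R" using L by (simp add: maximal_left_ideal_def)
    have JL: "J \<subseteq> L"
    proof
      fix j assume j: "j \<in> J"
      have jc: "j \<in> carrier R" using j Jc by blast
      show "j \<in> L"
      proof (rule ccontr)
        assume "j \<notin> L"
        then obtain r l where r: "r \<in> carrier R" and l: "l \<in> L" and e: "\<one> = r \<otimes> j \<oplus> l"
          using lmax_gen[OF L jc] by blast
        have lc: "l \<in> carrier R" using l lI_sub[OF Lr] by blast
        have rj: "r \<otimes> j \<in> jacobson R" using J_left[of j r] j r J_def by simp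
        obtain v where v: "v \<in> carrier R" "v \<otimes> (\<one> \<ominus> r \<otimes> j) = \<one>" using J_unit[OF rj] by blast
        have "l = (r \<otimes> j \<oplus> l) \<ominus> r \<otimes> j" using r jc lc by algebra
        then have "l = \<one> \<ominus> r \<otimes> j" using e by simp
        then have "v \<otimes> l = \<one>" using v by simp
        moreover have "v \<otimes> l \<in> L" by (rule lI_mult[OF Lr l v(1)])
        ultimately have "L = carrier R" using lI_one[OF Lr] by simp
        with Lne show False by simp
      qed
    qed
    show "ideal L R"
    proof (rule idealI[OF ring_axioms additive_subgroup.a_subgroup[OF lI_as[OF Lr]]])
      fix a x assume a: "a \<in> L" and x: "x \<in> carrier R"
      have ac: "a \<in> carrier R" using a lI_sub[OF Lr] by blast
      show "x \<otimes> a \<in> L" by (rule lI_mult[OF Lr a x])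
      have eq: "a \<otimes> x = x \<otimes> a \<oplus> (a \<otimes> x \<ominus> x \<otimes> a)" using ac x by algebra
      have "a \<otimes> x \<ominus> x \<otimes> a \<in> L" using comm[OF ac x] JL by blast
      then have mem: "x \<otimes> a \<oplus> (a \<otimes> x \<ominus> x \<otimes> a) \<in> L" by (rule lI_add[OF Lr lI_mult[OF Lr a x]])
      show "a \<otimes> x \<in> L" using mem eq by metis
    qed
  qed
  show ?thesis using qc rq lq J_def by simp
qed

theorem mainTheorem1:
  fixes A :: "('a, 'b) ring_scheme"
  assumes "ring A"
    and "\<one>\<^bsub>A\<^esub> \<noteq> \<zero>\<^bsub>A\<^esub>"
    and "centrally_essential (A Quot jacobson A)"
  shows "is_commutative (A Quot jacobson A) \<and> right_quasi_invariant A \<and> left_quasi_invariant A"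
  by (rule ring.main_aux[OF assms(1) assms(3)])


end
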